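(* Let $m,n\in\mathbb N$, $M_A=M_m(\mathbb C)$, $M_B=M_n(\mathbb C)$, let $U_A\in M_A$, $U_B\in M_B$ be unitary matrices, and let $\{e_{ij}\}$ be the matrix units of $M_m(\mathbb C)$. For a linear map $\psi:M_A\to M_B$ let $C^U_\psi:=\sum_{i,j=1}^m e_{ij}\otimes\psi(U_Ae_{ij})\in M_A\otimes M_B$ (the Choi $U$-matrix). Then $\psi$ is $(U_A,U_B)$-CP if and only if $C^U_\psi$ is $I_A\otimes U_B$-positive, i.e. $(I_m\otimes U_B^* )C^U_\psi$ is positive semidefinite.
   Context: For $k\in\mathbb N$ and a unitary $U$, write $U^k=\mathrm{diag}(U,\dots,U)$. A linear map $\psi:M_A\to M_B$ is $(U_A,U_B)$-CP if for every $k\in\mathbb N$ and every $V=[V_{ij}]\in M_k(M_A)$ with $(U_A^k)^*V\ge0$, one has $(U_B^k)^*[\psi(V_{ij})]\ge0$. $M_A\otimes M_B$ is identified with block matrices $M_m(M_n(\mathbb C))$. *)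

theory Defs
  imports "Jordan_Normal_Form.Matrix"
begin

definition adj :: "complex mat \<Rightarrow> complex mat" where
  "adj A = mat (dim_col A) (dim_row A) (\<lambda>(i,j). cnj (A $$ (j,i)))"

definition unitary_mat :: "nat \<Rightarrow> complex mat \<Rightarrow> bool" where
  "unitary_mat n U \<longleftrightarrow> U \<in> carrier_mat n n \<and> U * adj U = 1\<^sub>m n \<and> adj U * U = 1\<^sub>m n"

definition psd :: "nat \<Rightarrow> complex mat \<Rightarrow> bool" where
  "psd N A \<longleftrightarrow> A \<in> carrier_mat N N \<and>
     (\<forall>v \<in> carrier_vec N. let q = map_vec cnj v \<bullet> (A *\<^sub>v v) in Im q = 0 \<and> Re q \<ge> 0)"

text \<open>Block matrix [F i j] in M_k(M_d), identified with a (k*d) x (k*d) matrix.\<close>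
definition block_mat :: "nat \<Rightarrow> nat \<Rightarrow> (nat \<Rightarrow> nat \<Rightarrow> complex mat) \<Rightarrow> complex mat" where
  "block_mat k d F = mat (k*d) (k*d) (\<lambda>(r,c). F (r div d) (c div d) $$ (r mod d, c mod d))"

definition diag_rep :: "nat \<Rightarrow> nat \<Rightarrow> complex mat \<Rightarrow> complex mat" where
  "diag_rep k d U = block_mat k d (\<lambda>i j. if i = j then U else 0\<^sub>m d d)"

definition kron :: "nat \<Rightarrow> nat \<Rightarrow> complex mat \<Rightarrow> complex mat \<Rightarrow> complex mat" where
  "kron m n A B = mat (m*n) (m*n) (\<lambda>(r,c). A $$ (r div n, c div n) * B $$ (r mod n, c mod n))"

definition mat_unit :: "nat \<Rightarrow> nat \<Rightarrow> nat \<Rightarrow> complex mat" where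
  "mat_unit m i j = mat m m (\<lambda>(r,c). if r = i \<and> c = j then 1 else 0)"

definition lin_map :: "nat \<Rightarrow> nat \<Rightarrow> (complex mat \<Rightarrow> complex mat) \<Rightarrow> bool" where
  "lin_map m n \<psi> \<longleftrightarrow>
     (\<forall>A \<in> carrier_mat m m. \<psi> A \<in> carrier_mat n n) \<and>
     (\<forall>A \<in> carrier_mat m m. \<forall>B \<in> carrier_mat m m. \<psi> (A + B) = \<psi> A + \<psi> B) \<and>
     (\<forall>c. \<forall>A \<in> carrier_mat m m. \<psi> (c \<cdot>\<^sub>m A) = c \<cdot>\<^sub>m \<psi> A)"

definition UCP :: "nat \<Rightarrow> nat \<Rightarrow> complex mat \<Rightarrow> complex mat \<Rightarrow> (complex mat \<Rightarrow> complex mat) \<Rightarrow> bool" where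
  "UCP m n UA UB \<psi> \<longleftrightarrow>
     (\<forall>k \<ge> 1. \<forall>V :: nat \<Rightarrow> nat \<Rightarrow> complex mat.
        (\<forall>i<k. \<forall>j<k. V i j \<in> carrier_mat m m) \<longrightarrow>
        psd (k*m) (adj (diag_rep k m UA) * block_mat k m V) \<longrightarrow>
        psd (k*n) (adj (diag_rep k n UB) * block_mat k n (\<lambda>i j. \<psi> (V i j))))"

definition choi_U :: "nat \<Rightarrow> nat \<Rightarrow> complex mat \<Rightarrow> (complex mat \<Rightarrow> complex mat) \<Rightarrow> complex mat" where
  "choi_U m n UA \<psi> = mat (m*n) (m*n) (\<lambda>rc.
     \<Sum>i<m. \<Sum>j<m. kron m n (mat_unit m i j) (\<psi> (UA * mat_unit m i j)) $$ rc)"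

end

theory Submission
  imports Defs
begin

lemma sum_split_mult:
  fixes f :: "nat \<Rightarrow> 'a::comm_monoid_add"
  shows "(\<Sum>r<k*d. f r) = (\<Sum>a<k. \<Sum>s<d. f (a*d+s))"
proof -
  have "(\<Sum>r<k*d. f r) = (\<Sum>a<k. \<Sum>r\<in>{a*d..<a*d+d}. f r)"
    by (rule sum.nat_group[symmetric])
  also have "\<dots> = (\<Sum>a<k. \<Sum>s<d. f (a*d+s))"
  proof (rule sum.cong[OF refl])
    fix a
    have "(\<Sum>r\<in>{a*d..<a*d+d}. f r) = (\<Sum>s\<in>{0..<d}. f (s + a*d))"
      using sum.shift_bounds_nat_ivl[of f 0 "a*d" d] by (simp add: add.commute)
    then show "(\<Sum>r\<in>{a*d..<a*d+d}. f r) = (\<Sum>s<d. f (a*d+s))"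
      by (simp add: atLeast0LessThan add.commute)
  qed
  finally show ?thesis .
qed

definition bf :: "nat \<Rightarrow> (nat \<Rightarrow> nat \<Rightarrow> complex) \<Rightarrow> (nat \<Rightarrow> complex) \<Rightarrow> (nat \<Rightarrow> complex) \<Rightarrow> complex" where
  "bf N A x y = (\<Sum>i<N. \<Sum>j<N. cnj (x i) * A i j * y j)"

definition PSDf :: "nat \<Rightarrow> (nat \<Rightarrow> nat \<Rightarrow> complex) \<Rightarrow> bool" where
  "PSDf N A \<longleftrightarrow> (\<forall>y. 0 \<le> bf N A y y)"

lemma bf_add_left: "bf N A (\<lambda>i. x i + z i) y = bf N A x y + bf N A z y"
  unfolding bf_def by (simp add: ring_distribs sum.distrib)
lemma bf_add_right: "bf N A x (\<lambda>i. y i + z i) = bf N A x y + bf N A x z"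
  unfolding bf_def by (simp add: ring_distribs sum.distrib)
lemma bf_smult_left: "bf N A (\<lambda>i. t * x i) y = cnj t * bf N A x y"
  unfolding bf_def by (simp add: sum_distrib_left mult_ac)
lemma bf_smult_right: "bf N A x (\<lambda>i. t * y i) = t * bf N A x y"
  unfolding bf_def by (simp add: sum_distrib_left mult_ac)
lemma bf_delta_right: "r < N \<Longrightarrow> bf N A x (\<lambda>i. if i = r then 1 else 0) = (\<Sum>i<N. cnj (x i) * A i r)"
  unfolding bf_def by (simp add: if_distrib cong: if_cong)
lemma bf_delta_left: assumes "r < N" shows "bf N A (\<lambda>i. if i = r then 1 else 0) y = (\<Sum>j<N. A r j * y j)"
proof -
  have "\<And>i. (\<Sum>j<N. cnj (if i = r then 1 else 0) * A i j * y j) = (if i = r then (\<Sum>j<N. A r j * y j) else 0)"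
    by auto
  then show ?thesis unfolding bf_def using assms by simp
qed
lemma bf_delta_both: "r < N \<Longrightarrow> s < N \<Longrightarrow> bf N A (\<lambda>i. if i = r then 1 else 0) (\<lambda>i. if i = s then 1 else 0) = A r s"
  by (simp add: bf_delta_left if_distrib cong: if_cong)

lemma PSDf_cong: assumes "\<And>i j. i < N \<Longrightarrow> j < N \<Longrightarrow> A i j = B i j" shows "PSDf N A = PSDf N B"
proof -
  have "\<And>y. bf N A y y = bf N B y y" unfolding bf_def by (intro sum.cong refl) (simp add: assms)
  then show ?thesis unfolding PSDf_def by simp
qed

definition dl :: "nat \<Rightarrow> nat \<Rightarrow> complex" where "dl r = (\<lambda>i. if i = r then 1 else 0)"

lemma bf_dl: "r < N \<Longrightarrow> s < N \<Longrightarrow> bf N A (dl r) (dl s) = A r s"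
  unfolding dl_def by (rule bf_delta_both)

lemma nonneg_complex: "0 \<le> (z::complex) \<longleftrightarrow> Im z = 0 \<and> Re z \<ge> 0"
  by (auto simp: less_eq_complex_def)

lemma PSDf_herm:
  assumes P: "PSDf N A" and i: "i < N" and j: "j < N"
  shows "A j i = cnj (A i j)"
proof -
  have q: "\<And>y. Im (bf N A y y) = 0" using P unfolding PSDf_def nonneg_complex by blast
  have ii: "Im (A i i) = 0" using q[of "dl i"] bf_dl[OF i i] by simp
  have jj: "Im (A j j) = 0" using q[of "dl j"] bf_dl[OF j j] by simp
  have e1: "bf N A (\<lambda>x. dl i x + dl j x) (\<lambda>x. dl i x + dl j x) = A i i + A i j + A j i + A j j"
    by (simp add: bf_add_left bf_add_right bf_dl i j)
  have e2: "bf N A (\<lambda>x. dl i x + \<i> * dl j x) (\<lambda>x. dl i x + \<i> * dl j x) = A i i + \<i> * A i j - \<i> * A j i + A j j"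
    by (simp add: bf_add_left bf_add_right bf_smult_left bf_smult_right bf_dl i j)
  have r1: "Im (A i j) + Im (A j i) = 0" using q[of "\<lambda>x. dl i x + dl j x"] e1 ii jj by simp
  have r2: "Re (A i j) - Re (A j i) = 0" using q[of "\<lambda>x. dl i x + \<i> * dl j x"] e2 ii jj by simp
  show ?thesis using r1 r2 by (simp add: complex_eq_iff)
qed

lemma PSDf_diag: "PSDf N A \<Longrightarrow> r < N \<Longrightarrow> 0 \<le> A r r"
  unfolding PSDf_def using bf_dl[of r N r A] by metis

lemma PSDf_zero_row:
  assumes P: "PSDf N A" and r: "r < N" and j: "j < N" and d: "A r r = 0"
  shows "A r j = 0"
proof (rule ccontr)
  assume w0: "A r j \<noteq> 0"
  define w where "w = A r j"
  define c where "c = Re (A j j)"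
  have h: "A j r = cnj w" using PSDf_herm[OF P r j] w_def by simp
  have key: "2 * s * (cmod w)^2 \<le> c" for s :: real
  proof -
    define t where "t = - (complex_of_real s) * w"
    have e: "bf N A (\<lambda>x. dl j x + t * dl r x) (\<lambda>x. dl j x + t * dl r x) = A j j + t * A j r + cnj t * A r j + cnj t * t * A r r"
      by (simp add: bf_add_left bf_add_right bf_smult_left bf_smult_right bf_dl r j algebra_simps)
    also have "\<dots> = A j j - 2 * complex_of_real s * (w * cnj w)"
      using d h unfolding t_def w_def by (simp add: algebra_simps)
    also have "\<dots> = A j j - complex_of_real (2 * s * (cmod w)^2)"
      by (simp add: complex_norm_square[symmetric])
    finally have "0 \<le> Re (A j j - complex_of_real (2 * s * (cmod w)^2))"
      using P unfolding PSDf_def nonneg_complex by metis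
    then show ?thesis unfolding c_def by simp
  qed
  have pos: "(cmod w)^2 > 0" using w0 w_def by simp
  have "2 * ((c + 1) / (2 * (cmod w)^2)) * (cmod w)^2 \<le> c" by (rule key)
  also have "2 * ((c + 1) / (2 * (cmod w)^2)) * (cmod w)^2 = c + 1" using pos by (simp add: field_simps)
  finally show False by simp
qed

lemma bf_diff: "bf N (\<lambda>i j. A i j - B i j) x y = bf N A x y - bf N B x y"
  unfolding bf_def by (simp add: algebra_simps sum_subtractf)

lemma bf_rank1: "bf N (\<lambda>i j. u i * cnj (u j)) x y = cnj (\<Sum>i<N. cnj (u i) * x i) * (\<Sum>j<N. cnj (u j) * y j)"
  unfolding bf_def cnj_sum sum_product by (simp add: mult_ac)

lemma PSDf_schur:
  assumes P: "PSDf N A" and r: "r < N" and d0: "A r r \<noteq> 0"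
  defines "sq \<equiv> complex_of_real (sqrt (Re (A r r)))"
  shows "PSDf N (\<lambda>i j. A i j - (A i r / sq) * cnj (A j r / sq))"
proof -
  define d where "d = A r r"
  have dnn: "0 \<le> d" using PSDf_diag[OF P r] d_def by simp
  then have dIm: "Im d = 0" and dRe: "Re d \<ge> 0" by (auto simp: less_eq_complex_def)
  have cd: "cnj d = d" using dIm by (simp add: complex_eq_iff)
  have sqsq: "sq * sq = d" unfolding sq_def d_def using dIm dRe d_def
    by (simp add: complex_eq_iff flip: of_real_mult)
  have csq: "cnj sq = sq" unfolding sq_def by simp
  have sq0: "sq \<noteq> 0" using sqsq d0 d_def by auto
  show ?thesis unfolding PSDf_def
  proof
    fix y
    define w where "w = (\<Sum>j<N. A r j * y j)"
    define t where "t = - w / d"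
    have S: "(\<Sum>j<N. cnj (A j r / sq) * y j) = w / sq"
      unfolding w_def by (simp add: sum_divide_distrib csq PSDf_herm[OF P r] r)
    have S2: "(\<Sum>i<N. cnj (y i) * A i r) = cnj w"
      unfolding w_def by (simp add: PSDf_herm[OF P _ r] mult.commute)
    have "bf N (\<lambda>i j. A i j - (A i r / sq) * cnj (A j r / sq)) y y = bf N A y y - cnj (w / sq) * (w / sq)"
      by (subst bf_diff, subst bf_rank1, simp only: S)
    also have "\<dots> = bf N A y y - cnj w * w / d"
      using csq sqsq by (simp add: field_simps)
    also have "\<dots> = bf N A y y + t * cnj w + cnj t * w + cnj t * t * d"
      unfolding t_def using cd d0 d_def by (simp add: field_simps)
    also have "\<dots> = bf N A y y + t * bf N A y (dl r) + cnj t * bf N A (dl r) y + cnj t * t * bf N A (dl r) (dl r)"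
    proof -
      have "bf N A y (dl r) = cnj w" unfolding dl_def using bf_delta_right[OF r] S2 by simp
      moreover have "bf N A (dl r) y = w" unfolding dl_def w_def using bf_delta_left[OF r] by simp
      moreover have "bf N A (dl r) (dl r) = d" using bf_dl[OF r r] d_def by simp
      ultimately show ?thesis by simp
    qed
    also have "\<dots> = bf N A (\<lambda>x. y x + t * dl r x) (\<lambda>x. y x + t * dl r x)"
      by (simp add: bf_add_left bf_add_right bf_smult_left bf_smult_right algebra_simps)
    finally show "0 \<le> bf N (\<lambda>i j. A i j - (A i r / sq) * cnj (A j r / sq)) y y"
      using P unfolding PSDf_def by simp
  qed
qed

lemma sq_facts:
  assumes P: "PSDf N A" and r: "r < N"
  defines "sq \<equiv> complex_of_real (sqrt (Re (A r r)))"
  shows "sq * sq = A r r" "cnj sq = sq" "cnj (A r r) = A r r"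
proof -
  have "0 \<le> A r r" using PSDf_diag[OF P r] by simp
  then have dIm: "Im (A r r) = 0" and dRe: "Re (A r r) \<ge> 0" by (auto simp: less_eq_complex_def)
  show "cnj (A r r) = A r r" using dIm by (simp add: complex_eq_iff)
  show "sq * sq = A r r" unfolding sq_def using dIm dRe
    by (simp add: complex_eq_iff flip: of_real_mult)
  show "cnj sq = sq" unfolding sq_def by simp
qed

lemma gram_aux:
  "r \<le> N \<Longrightarrow> PSDf N A \<Longrightarrow> (\<forall>i<N. \<forall>j<N. (i < r \<or> j < r) \<longrightarrow> A i j = 0) \<Longrightarrow>
   \<exists>c. \<forall>i<N. \<forall>j<N. A i j = (\<Sum>l\<in>{r..<N}. c l i * cnj (c l j))"
proof (induction "N - r" arbitrary: r A)
  case 0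
  then have "r = N" by simp
  then show ?case using 0 by auto
next
  case (Suc x)
  then have rN: "r < N" by simp
  have xN: "x = N - Suc r" using Suc(2) by arith
  have split: "{r..<N} = insert r {Suc r..<N}" using rN by auto
  show ?case
  proof (cases "A r r = 0")
    case True
    have z1: "A r j = 0" if "j < N" for j using PSDf_zero_row[OF Suc(4) rN that True] .
    have z2: "A j r = 0" if "j < N" for j using PSDf_herm[OF Suc(4) rN that] z1[OF that] by simp
    have "\<forall>i<N. \<forall>j<N. (i < Suc r \<or> j < Suc r) \<longrightarrow> A i j = 0"
      using Suc(5) z1 z2 by (auto simp: less_Suc_eq)
    with Suc(1)[OF xN _ Suc(4)] rN obtain c where
      c: "\<forall>i<N. \<forall>j<N. A i j = (\<Sum>l\<in>{Suc r..<N}. c l i * cnj (c l j))" by auto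
    show ?thesis
    proof (intro exI allI impI)
      fix i j assume i: "i < N" and j: "j < N"
      have "(\<Sum>l\<in>{r..<N}. (c(r := (\<lambda>_. 0))) l i * cnj ((c(r := (\<lambda>_. 0))) l j)) =
            (\<Sum>l\<in>{Suc r..<N}. c l i * cnj (c l j))"
        unfolding split by (auto intro!: sum.cong)
      then show "A i j = (\<Sum>l\<in>{r..<N}. (c(r := (\<lambda>_. 0))) l i * cnj ((c(r := (\<lambda>_. 0))) l j))"
        using c i j by simp
    qed
  next
    case False
    define sq where "sq = complex_of_real (sqrt (Re (A r r)))"
    define v where "v i = A i r / sq" for i
    define A' where "A' i j = A i j - v i * cnj (v j)" for i j
    have sqf: "sq * sq = A r r" "cnj sq = sq" "cnj (A r r) = A r r"
      using sq_facts[OF Suc(4) rN] unfolding sq_def by auto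
    have P': "PSDf N A'" unfolding A'_def v_def sq_def by (rule PSDf_schur[OF Suc(4) rN False])
    have "\<forall>i<N. \<forall>j<N. (i < Suc r \<or> j < Suc r) \<longrightarrow> A' i j = 0"
    proof (intro allI impI)
      fix i j assume i: "i < N" and j: "j < N" and ij: "i < Suc r \<or> j < Suc r"
      have h1: "A r j = cnj (A j r)" using PSDf_herm[OF Suc(4) j rN] .
      have h2: "A i r = cnj (A r i)" using PSDf_herm[OF Suc(4) i rN] by simp
      consider "i < r" | "j < r" | "i = r" | "j = r" using ij by linarith
      then show "A' i j = 0"
      proof cases
        case 1 then show ?thesis using Suc(5) i j rN unfolding A'_def v_def by auto
      next
        case 2 then show ?thesis using Suc(5) i j rN unfolding A'_def v_def by auto
      next
        case 3
        have "v r * cnj (v j) = A r r / (sq * sq) * cnj (A j r)" unfolding v_def using sqf by (simp add: field_simps)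
        also have "\<dots> = A r j" using sqf False h1 by simp
        finally show ?thesis unfolding A'_def 3 by simp
      next
        case 4
        have "v i * cnj (v r) = A i r * (A r r / (sq * sq))" unfolding v_def using sqf by (simp add: field_simps)
        also have "\<dots> = A i r" using sqf False by simp
        finally show ?thesis unfolding A'_def 4 by simp
      qed
    qed
    with Suc(1)[OF xN _ P'] rN obtain c where
      c: "\<forall>i<N. \<forall>j<N. A' i j = (\<Sum>l\<in>{Suc r..<N}. c l i * cnj (c l j))" by auto
    show ?thesis
    proof (intro exI allI impI)
      fix i j assume i: "i < N" and j: "j < N"
      have "(\<Sum>l\<in>{r..<N}. (c(r := v)) l i * cnj ((c(r := v)) l j)) =
            v i * cnj (v j) + (\<Sum>l\<in>{Suc r..<N}. c l i * cnj (c l j))"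
        unfolding split by (auto intro!: sum.cong)
      then show "A i j = (\<Sum>l\<in>{r..<N}. (c(r := v)) l i * cnj ((c(r := v)) l j))"
        using c i j unfolding A'_def by (simp add: algebra_simps)
    qed
  qed
qed

lemma gram:
  assumes "PSDf N A"
  shows "\<exists>c. \<forall>i<N. \<forall>j<N. A i j = (\<Sum>l<N. c l i * cnj (c l j))"
  using gram_aux[of 0 N A] assms by (simp add: atLeast0LessThan)


lemma divmod_simps[simp]:
  fixes a s d :: nat
  assumes "s < d"
  shows "(a*d+s) div d = a" "(a*d+s) mod d = s"
  using assms by auto

lemma bf_sum: "finite L \<Longrightarrow> bf N (\<lambda>i j. \<Sum>l\<in>L. M l i j) y y = (\<Sum>l\<in>L. bf N (M l) y y)"
proof -
  have "bf N (\<lambda>i j. \<Sum>l\<in>L. M l i j) y y = (\<Sum>i<N. \<Sum>j<N. \<Sum>l\<in>L. cnj (y i) * M l i j * y j)"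
    unfolding bf_def by (simp add: sum_distrib_left sum_distrib_right)
  also have "\<dots> = (\<Sum>i<N. \<Sum>l\<in>L. \<Sum>j<N. cnj (y i) * M l i j * y j)"
    by (rule sum.cong[OF refl], rule sum.swap)
  also have "\<dots> = (\<Sum>l\<in>L. \<Sum>i<N. \<Sum>j<N. cnj (y i) * M l i j * y j)"
    by (rule sum.swap)
  finally show ?thesis unfolding bf_def .
qed

lemma rank1_core:
  fixes u y :: "nat \<Rightarrow> complex" and m n k :: nat
  assumes n0: "0 < n" and m0: "0 < m"
  defines "z \<equiv> (\<lambda>r'. \<Sum>t<n. cnj (u (r' mod m * n + t)) * y (r' div m * n + t))"
  shows "bf (k*n) (\<lambda>r c'. \<Sum>p<m. \<Sum>q<m. Wf (r div n * m + p) (c' div n * m + q) * (u (p*n + r mod n) * cnj (u (q*n + c' mod n)))) y y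
       = bf (k*m) Wf z z"
proof -
  define G where "G a b s t p q = cnj (y (a*n+s)) * u (p*n+s) * Wf (a*m+p) (b*m+q) * cnj (u (q*n+t)) * y (b*n+t)" for a b s t p q
  have inner: "(\<Sum>s<n. \<Sum>t<n. \<Sum>p<m. \<Sum>q<m. G a b s t p q) = (\<Sum>p<m. \<Sum>q<m. \<Sum>s<n. \<Sum>t<n. G a b s t p q)" for a b
  proof -
    have "(\<Sum>s<n. \<Sum>t<n. \<Sum>p<m. \<Sum>q<m. G a b s t p q) = (\<Sum>s<n. \<Sum>p<m. \<Sum>t<n. \<Sum>q<m. G a b s t p q)"
      by (rule sum.cong[OF refl], rule sum.swap)
    also have "\<dots> = (\<Sum>s<n. \<Sum>p<m. \<Sum>q<m. \<Sum>t<n. G a b s t p q)"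
      by (rule sum.cong[OF refl], rule sum.cong[OF refl], rule sum.swap)
    also have "\<dots> = (\<Sum>p<m. \<Sum>s<n. \<Sum>q<m. \<Sum>t<n. G a b s t p q)"
      by (rule sum.swap)
    also have "\<dots> = (\<Sum>p<m. \<Sum>q<m. \<Sum>s<n. \<Sum>t<n. G a b s t p q)"
      by (rule sum.cong[OF refl], rule sum.swap)
    finally show "(\<Sum>s<n. \<Sum>t<n. \<Sum>p<m. \<Sum>q<m. G a b s t p q) = (\<Sum>p<m. \<Sum>q<m. \<Sum>s<n. \<Sum>t<n. G a b s t p q)" .
  qed
  have "bf (k*n) (\<lambda>r c'. \<Sum>p<m. \<Sum>q<m. Wf (r div n * m + p) (c' div n * m + q) * (u (p*n + r mod n) * cnj (u (q*n + c' mod n)))) y y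
     = (\<Sum>a<k. \<Sum>s<n. \<Sum>b<k. \<Sum>t<n. \<Sum>p<m. \<Sum>q<m. G a b s t p q)"
    unfolding bf_def G_def
    apply (simp only: sum_split_mult)
    apply (simp only: sum_distrib_left sum_distrib_right)
    apply (intro sum.cong refl)
    apply (simp add: mult_ac)
    done
  also have "\<dots> = (\<Sum>a<k. \<Sum>b<k. \<Sum>s<n. \<Sum>t<n. \<Sum>p<m. \<Sum>q<m. G a b s t p q)"
    by (rule sum.cong[OF refl], rule sum.swap)
  also have "\<dots> = (\<Sum>a<k. \<Sum>b<k. \<Sum>p<m. \<Sum>q<m. \<Sum>s<n. \<Sum>t<n. G a b s t p q)"
    by (simp only: inner)
  also have "\<dots> = (\<Sum>a<k. \<Sum>p<m. \<Sum>b<k. \<Sum>q<m. \<Sum>s<n. \<Sum>t<n. G a b s t p q)"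
    by (rule sum.cong[OF refl], rule sum.swap)
  also have "\<dots> = (\<Sum>a<k. \<Sum>p<m. \<Sum>b<k. \<Sum>q<m. \<Sum>t<n. \<Sum>s<n. G a b s t p q)"
    by (rule sum.cong[OF refl], rule sum.cong[OF refl], rule sum.cong[OF refl], rule sum.cong[OF refl], rule sum.swap)
  also have "\<dots> = bf (k*m) Wf z z"
    unfolding bf_def G_def z_def
    apply (simp only: sum_split_mult cnj_sum)
    apply (simp only: sum_distrib_left sum_distrib_right)
    apply (intro sum.cong refl)
    apply (simp add: mult_ac)
    done
  finally show ?thesis .
qed

lemma idx_bound: "p < m \<Longrightarrow> s < (n::nat) \<Longrightarrow> p*n + s < m*n"
proof -
  assume a: "p < m" "s < n"
  have "p*n + s < p*n + n" using a by simp
  also have "\<dots> = Suc p * n" by simp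
  also have "\<dots> \<le> m * n" using a by (intro mult_right_mono) auto
  finally show ?thesis .
qed

lemma choi_core:
  fixes m n k :: nat
  assumes n0: "0 < n" and m0: "0 < m" and C: "PSDf (m*n) C" and W: "PSDf (k*m) Wf"
  shows "PSDf (k*n) (\<lambda>r c'. \<Sum>p<m. \<Sum>q<m. Wf (r div n * m + p) (c' div n * m + q) * C (p*n + r mod n) (q*n + c' mod n))"
proof -
  obtain c where c: "\<forall>i<m*n. \<forall>j<m*n. C i j = (\<Sum>l<m*n. c l i * cnj (c l j))" using gram[OF C] by blast
  define T where "T l r c' = (\<Sum>p<m. \<Sum>q<m. Wf (r div n * m + p) (c' div n * m + q) * (c l (p*n + r mod n) * cnj (c l (q*n + c' mod n))))" for l r c'
  have eq: "(\<Sum>p<m. \<Sum>q<m. Wf (r div n * m + p) (c' div n * m + q) * C (p*n + r mod n) (q*n + c' mod n)) = (\<Sum>l<m*n. T l r c')"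
    if r: "r < k*n" and c': "c' < k*n" for r c'
  proof -
    have "(\<Sum>p<m. \<Sum>q<m. Wf (r div n * m + p) (c' div n * m + q) * C (p*n + r mod n) (q*n + c' mod n))
        = (\<Sum>p<m. \<Sum>q<m. \<Sum>l<m*n. Wf (r div n * m + p) (c' div n * m + q) * (c l (p*n + r mod n) * cnj (c l (q*n + c' mod n))))"
      apply (intro sum.cong refl)
      apply (subst c[rule_format])
        apply (simp_all add: idx_bound n0 sum_distrib_left)
      done
    also have "\<dots> = (\<Sum>p<m. \<Sum>l<m*n. \<Sum>q<m. Wf (r div n * m + p) (c' div n * m + q) * (c l (p*n + r mod n) * cnj (c l (q*n + c' mod n))))"
      by (rule sum.cong[OF refl], rule sum.swap)
    also have "\<dots> = (\<Sum>l<m*n. T l r c')"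
      unfolding T_def by (rule sum.swap)
    finally show ?thesis .
  qed
  have "PSDf (k*n) (\<lambda>r c'. \<Sum>l<m*n. T l r c')"
    unfolding PSDf_def
  proof
    fix y
    have "bf (k*n) (\<lambda>r c'. \<Sum>l<m*n. T l r c') y y = (\<Sum>l<m*n. bf (k*n) (T l) y y)"
      by (rule bf_sum) simp
    also have "\<dots> = (\<Sum>l<m*n. bf (k*m) Wf (\<lambda>r'. \<Sum>t<n. cnj (c l (r' mod m * n + t)) * y (r' div m * n + t))
                                    (\<lambda>r'. \<Sum>t<n. cnj (c l (r' mod m * n + t)) * y (r' div m * n + t)))"
      unfolding T_def by (intro sum.cong refl rank1_core n0 m0)
    also have "0 \<le> \<dots>" using W unfolding PSDf_def by (intro sum_nonneg) blast
    finally show "0 \<le> bf (k*n) (\<lambda>r c'. \<Sum>l<m*n. T l r c') y y" .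
  qed
  then show ?thesis using eq PSDf_cong by (smt (verit))
qed


lemma adj_dims[simp]: "dim_row (adj A) = dim_col A" "dim_col (adj A) = dim_row A"
  unfolding adj_def by auto
lemma adj_index[simp]: "i < dim_col A \<Longrightarrow> j < dim_row A \<Longrightarrow> adj A $$ (i,j) = cnj (A $$ (j,i))"
  unfolding adj_def by auto
lemma adj_carrier: "A \<in> carrier_mat a b \<Longrightarrow> adj A \<in> carrier_mat b a"
  by auto

lemma block_dims[simp]: "dim_row (block_mat k d F) = k*d" "dim_col (block_mat k d F) = k*d"
  unfolding block_mat_def by auto
lemma block_index: "r < k*d \<Longrightarrow> c < k*d \<Longrightarrow> block_mat k d F $$ (r,c) = F (r div d) (c div d) $$ (r mod d, c mod d)"
  unfolding block_mat_def by auto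
lemma block_div_bound: "r < k*d \<Longrightarrow> r div d < (k::nat)"
  by (simp add: less_mult_imp_div_less)
lemma block_mod_bound: "r < k*d \<Longrightarrow> r mod d < (d::nat)"
  by (metis mod_less_divisor mult_0_right neq0_conv not_less0)

lemma psd_iff:
  assumes A: "A \<in> carrier_mat N N"
  shows "psd N A \<longleftrightarrow> PSDf N (\<lambda>i j. A $$ (i,j))"
proof -
  have q: "map_vec cnj v \<bullet> (A *\<^sub>v v) = bf N (\<lambda>i j. A $$ (i,j)) (\<lambda>i. v $ i) (\<lambda>i. v $ i)"
    if v: "v \<in> carrier_vec N" for v
    using A v unfolding bf_def
    by (simp add: scalar_prod_def mult_mat_vec_def row_def sum_distrib_left mult_ac atLeast0LessThan)
  show ?thesis
  proof
    assume p: "psd N A"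
    show "PSDf N (\<lambda>i j. A $$ (i,j))" unfolding PSDf_def
    proof
      fix y :: "nat \<Rightarrow> complex"
      have v: "vec N y \<in> carrier_vec N" by simp
      have "bf N (\<lambda>i j. A $$ (i,j)) y y = bf N (\<lambda>i j. A $$ (i,j)) (\<lambda>i. vec N y $ i) (\<lambda>i. vec N y $ i)"
        unfolding bf_def by (intro sum.cong refl) simp
      also have "\<dots> = map_vec cnj (vec N y) \<bullet> (A *\<^sub>v vec N y)" using q[OF v] by simp
      finally show "0 \<le> bf N (\<lambda>i j. A $$ (i,j)) y y"
        using p v unfolding psd_def Let_def nonneg_complex by simp
    qed
  next
    assume p: "PSDf N (\<lambda>i j. A $$ (i,j))"
    show "psd N A" unfolding psd_def Let_def
      using A q p unfolding PSDf_def nonneg_complex by simp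
  qed
qed

lemma adj_diag_block:
  assumes d0: "0 < d" and U: "U \<in> carrier_mat d d" and F: "\<And>i j. i < k \<Longrightarrow> j < k \<Longrightarrow> F i j \<in> carrier_mat d d"
  shows "adj (diag_rep k d U) * block_mat k d F = block_mat k d (\<lambda>i j. adj U * F i j)"
proof (rule eq_matI)
  show "dim_row (adj (diag_rep k d U) * block_mat k d F) = dim_row (block_mat k d (\<lambda>i j. adj U * F i j))"
    unfolding diag_rep_def by simp
  show "dim_col (adj (diag_rep k d U) * block_mat k d F) = dim_col (block_mat k d (\<lambda>i j. adj U * F i j))"
    unfolding diag_rep_def by simp
  fix r c assume r: "r < dim_row (block_mat k d (\<lambda>i j. adj U * F i j))" and c: "c < dim_col (block_mat k d (\<lambda>i j. adj U * F i j))"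
  then have r: "r < k*d" and c: "c < k*d" by auto
  have rk: "r div d < k" and ck: "c div d < k" using r c block_div_bound by auto
  have rd: "r mod d < d" and cd: "c mod d < d" using d0 by auto
  have Fc: "F (r div d) (c div d) \<in> carrier_mat d d" using F rk ck by auto
  have "(adj (diag_rep k d U) * block_mat k d F) $$ (r,c) = (\<Sum>s<k*d. adj (diag_rep k d U) $$ (r,s) * block_mat k d F $$ (s,c))"
    using r c unfolding diag_rep_def by (simp add: scalar_prod_def atLeast0LessThan)
  also have "\<dots> = (\<Sum>a<k. \<Sum>t<d. adj (diag_rep k d U) $$ (r,a*d+t) * block_mat k d F $$ (a*d+t,c))"
    by (rule sum_split_mult)
  also have "\<dots> = (\<Sum>a<k. if a = r div d then (\<Sum>t<d. cnj (U $$ (t, r mod d)) * F (r div d) (c div d) $$ (t, c mod d)) else 0)"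
  proof (intro sum.cong refl)
    fix a assume a: "a \<in> {..<k}"
    have "(\<Sum>t<d. adj (diag_rep k d U) $$ (r,a*d+t) * block_mat k d F $$ (a*d+t,c)) =
          (\<Sum>t<d. if a = r div d then cnj (U $$ (t, r mod d)) * F (r div d) (c div d) $$ (t, c mod d) else 0)"
    proof (intro sum.cong refl)
      fix t assume t: "t \<in> {..<d}"
      have at: "a*d+t < k*d" using idx_bound[of a k t d] a t by auto
      show "adj (diag_rep k d U) $$ (r,a*d+t) * block_mat k d F $$ (a*d+t,c) =
          (if a = r div d then cnj (U $$ (t, r mod d)) * F (r div d) (c div d) $$ (t, c mod d) else 0)"
        using at r c t rd U unfolding diag_rep_def by (simp add: block_index)
    qed
    then show "(\<Sum>t<d. adj (diag_rep k d U) $$ (r,a*d+t) * block_mat k d F $$ (a*d+t,c)) =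
          (if a = r div d then (\<Sum>t<d. cnj (U $$ (t, r mod d)) * F (r div d) (c div d) $$ (t, c mod d)) else 0)"
      by simp
  qed
  also have "\<dots> = (\<Sum>t<d. cnj (U $$ (t, r mod d)) * F (r div d) (c div d) $$ (t, c mod d))"
    using rk by simp
  also have "\<dots> = block_mat k d (\<lambda>i j. adj U * F i j) $$ (r,c)"
    using r c rd cd U Fc by (simp add: block_index scalar_prod_def atLeast0LessThan)
  finally show "(adj (diag_rep k d U) * block_mat k d F) $$ (r,c) = block_mat k d (\<lambda>i j. adj U * F i j) $$ (r,c)" .
qed

lemma kron_adj:
  assumes n0: "0 < n" and U: "U \<in> carrier_mat n n"
  shows "kron m n (1\<^sub>m m) (adj U) = adj (diag_rep m n U)"
proof (rule eq_matI)
  fix r c assume r: "r < dim_row (adj (diag_rep m n U))" and c: "c < dim_col (adj (diag_rep m n U))"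
  then have r: "r < m*n" and c: "c < m*n" unfolding diag_rep_def by auto
  have rk: "r div n < m" and ck: "c div n < m" using r c block_div_bound by auto
  have rd: "r mod n < n" and cd: "c mod n < n" using n0 by auto
  show "kron m n (1\<^sub>m m) (adj U) $$ (r,c) = adj (diag_rep m n U) $$ (r,c)"
    using r c rk ck rd cd U unfolding kron_def diag_rep_def by (auto simp: block_index)
qed (auto simp: kron_def diag_rep_def)

lemma mat_unit_index: "p < m \<Longrightarrow> q < m \<Longrightarrow> mat_unit m i j $$ (p,q) = (if p = i \<and> q = j then 1 else 0)"
  unfolding mat_unit_def by simp
lemma mat_unit_carrier[simp]: "mat_unit m i j \<in> carrier_mat m m"
  unfolding mat_unit_def by simp

lemma choi_block:
  assumes n0: "0 < n"
  shows "choi_U m n UA \<psi> = block_mat m n (\<lambda>i j. \<psi> (UA * mat_unit m i j))"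
proof (rule eq_matI)
  fix r c assume r: "r < dim_row (block_mat m n (\<lambda>i j. \<psi> (UA * mat_unit m i j)))"
    and c: "c < dim_col (block_mat m n (\<lambda>i j. \<psi> (UA * mat_unit m i j)))"
  then have r: "r < m*n" and c: "c < m*n" by auto
  have rk: "r div n < m" and ck: "c div n < m" using r c block_div_bound by auto
  have "choi_U m n UA \<psi> $$ (r,c) = (\<Sum>i<m. \<Sum>j<m. (if r div n = i \<and> c div n = j then 1 else 0) * \<psi> (UA * mat_unit m i j) $$ (r mod n, c mod n))"
    using r c rk ck unfolding choi_U_def kron_def by (simp add: mat_unit_index)
  also have "\<dots> = (\<Sum>i<m. \<Sum>j<m. if r div n = i then (if j = c div n then \<psi> (UA * mat_unit m i j) $$ (r mod n, c mod n) else 0) else 0)"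
    by (intro sum.cong refl) auto
  also have "\<dots> = (\<Sum>i<m. if r div n = i then \<psi> (UA * mat_unit m i (c div n)) $$ (r mod n, c mod n) else 0)"
    using ck by (intro sum.cong refl) (simp add: sum.If_cases)
  also have "\<dots> = block_mat m n (\<lambda>i j. \<psi> (UA * mat_unit m i j)) $$ (r,c)"
    using rk r c by (simp add: block_index)
  finally show "choi_U m n UA \<psi> $$ (r,c) = block_mat m n (\<lambda>i j. \<psi> (UA * mat_unit m i j)) $$ (r,c)" .
qed (auto simp: choi_U_def)

lemma lin_expand:
  assumes L: "lin_map m n \<phi>" and X: "X \<in> carrier_mat m m" and s: "s < n" and t: "t < n"
  shows "\<phi> X $$ (s,t) = (\<Sum>p<m. \<Sum>q<m. X $$ (p,q) * \<phi> (mat_unit m p q) $$ (s,t))"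
proof -
  have car: "\<And>A. A \<in> carrier_mat m m \<Longrightarrow> \<phi> A \<in> carrier_mat n n"
    and add: "\<And>A B. A \<in> carrier_mat m m \<Longrightarrow> B \<in> carrier_mat m m \<Longrightarrow> \<phi> (A + B) = \<phi> A + \<phi> B"
    and sm: "\<And>c A. A \<in> carrier_mat m m \<Longrightarrow> \<phi> (c \<cdot>\<^sub>m A) = c \<cdot>\<^sub>m \<phi> A"
    using L unfolding lin_map_def by auto
  define XS where "XS S = mat m m (\<lambda>(p,q). if (p,q) \<in> S then X $$ (p,q) else 0)" for S
  have XSc: "XS S \<in> carrier_mat m m" for S unfolding XS_def by simp
  have main: "\<phi> (XS S) $$ (s,t) = (\<Sum>x\<in>S. X $$ x * \<phi> (mat_unit m (fst x) (snd x)) $$ (s,t))"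
    if "finite S" "S \<subseteq> {..<m} \<times> {..<m}" for S
    using that
  proof (induction S rule: finite_induct)
    case empty
    have "XS {} = 0 \<cdot>\<^sub>m X" unfolding XS_def using X by (auto intro!: eq_matI)
    then have "\<phi> (XS {}) = 0 \<cdot>\<^sub>m \<phi> X" using sm X by simp
    then show ?case using car[OF X] s t by simp
  next
    case (insert x S)
    obtain p q where x: "x = (p,q)" by (cases x)
    have pq: "p < m" "q < m" using insert(4) x by auto
    have "XS (insert x S) = XS S + X $$ (p,q) \<cdot>\<^sub>m mat_unit m p q"
      unfolding XS_def x using insert(2) x pq by (auto intro!: eq_matI simp: mat_unit_def)
    then have "\<phi> (XS (insert x S)) = \<phi> (XS S) + X $$ (p,q) \<cdot>\<^sub>m \<phi> (mat_unit m p q)"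
      using add sm XSc by simp
    then have "\<phi> (XS (insert x S)) $$ (s,t) = \<phi> (XS S) $$ (s,t) + X $$ (p,q) * \<phi> (mat_unit m p q) $$ (s,t)"
    proof -
      have d1: "dim_row (\<phi> (XS S)) = n" "dim_col (\<phi> (XS S)) = n" using car[OF XSc[of S]] by auto
      have d2: "dim_row (\<phi> (mat_unit m p q)) = n" "dim_col (\<phi> (mat_unit m p q)) = n"
        using car[OF mat_unit_carrier[of m p q]] by auto
      show ?thesis using d1 d2 s t \<open>\<phi> (XS (insert x S)) = \<phi> (XS S) + X $$ (p,q) \<cdot>\<^sub>m \<phi> (mat_unit m p q)\<close> by simp
    qed
    then show ?case using insert x by simp
  qed
  have "XS ({..<m} \<times> {..<m}) = X" unfolding XS_def using X by (auto intro!: eq_matI)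
  then have "\<phi> X $$ (s,t) = (\<Sum>x\<in>{..<m} \<times> {..<m}. X $$ x * \<phi> (mat_unit m (fst x) (snd x)) $$ (s,t))"
    using main[of "{..<m} \<times> {..<m}"] by simp
  also have "\<dots> = (\<Sum>p<m. \<Sum>q<m. X $$ (p,q) * \<phi> (mat_unit m p q) $$ (s,t))"
    by (simp add: sum.cartesian_product case_prod_beta)
  finally show ?thesis .
qed


lemma PSDf_rank1: "PSDf N (\<lambda>i j. u i * cnj (u j))"
  unfolding PSDf_def bf_rank1
proof
  fix y
  have gen: "0 \<le> cnj S * S" for S :: complex
    by (simp add: less_eq_complex_def)
  then show "0 \<le> cnj (\<Sum>i<N. cnj (u i) * y i) * (\<Sum>j<N. cnj (u j) * y j)" by blast
qed

theorem theorem3p4: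
  fixes m n :: nat and UA UB :: "complex mat" and \<psi> :: "complex mat \<Rightarrow> complex mat"
  assumes "m \<ge> 1" and "n \<ge> 1"
    and "unitary_mat m UA" and "unitary_mat n UB"
    and "lin_map m n \<psi>"
  shows "UCP m n UA UB \<psi> \<longleftrightarrow> psd (m*n) (kron m n (1\<^sub>m m) (adj UB) * choi_U m n UA \<psi>)"
proof -
  have m0: "0 < m" and n0: "0 < n" using assms by auto
  have UA: "UA \<in> carrier_mat m m" and UA1: "adj UA * UA = 1\<^sub>m m" and UA2: "UA * adj UA = 1\<^sub>m m"
    using assms(3) unfolding unitary_mat_def by auto
  have UB: "UB \<in> carrier_mat n n" using assms(4) unfolding unitary_mat_def by auto
  have aUA: "adj UA \<in> carrier_mat m m" and aUB: "adj UB \<in> carrier_mat n n" using UA UB by auto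
  have car: "\<And>A. A \<in> carrier_mat m m \<Longrightarrow> \<psi> A \<in> carrier_mat n n"
    and add: "\<And>A B. A \<in> carrier_mat m m \<Longrightarrow> B \<in> carrier_mat m m \<Longrightarrow> \<psi> (A + B) = \<psi> A + \<psi> B"
    and sm: "\<And>c A. A \<in> carrier_mat m m \<Longrightarrow> \<psi> (c \<cdot>\<^sub>m A) = c \<cdot>\<^sub>m \<psi> A"
    using assms(5) unfolding lin_map_def by auto
  define \<phi> where "\<phi> X = adj UB * \<psi> (UA * X)" for X
  have Lphi: "lin_map m n \<phi>" unfolding lin_map_def
  proof (intro conjI ballI allI)
    fix A :: "complex mat" assume A: "A \<in> carrier_mat m m"
    show "\<phi> A \<in> carrier_mat n n" unfolding \<phi>_def using car[of "UA * A"] A UA aUB by auto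
  next
    fix A B :: "complex mat" assume A: "A \<in> carrier_mat m m" and B: "B \<in> carrier_mat m m"
    have "UA * (A + B) = UA * A + UA * B" using A B UA by (simp add: mult_add_distrib_mat)
    then show "\<phi> (A + B) = \<phi> A + \<phi> B" unfolding \<phi>_def
      using add[of "UA * A" "UA * B"] A B UA car[of "UA * A"] car[of "UA * B"] aUB
      by (simp add: mult_add_distrib_mat)
  next
    fix c :: complex and A :: "complex mat" assume A: "A \<in> carrier_mat m m"
    have "UA * (c \<cdot>\<^sub>m A) = c \<cdot>\<^sub>m (UA * A)" using mult_smult_distrib[OF UA A] by simp
    then show "\<phi> (c \<cdot>\<^sub>m A) = c \<cdot>\<^sub>m \<phi> A" unfolding \<phi>_def
      using sm[of "UA * A"] A UA car[of "UA * A"] aUB mult_smult_distrib[OF aUB car[of "UA * A"]] by simp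
  qed
  have phic: "\<And>A. A \<in> carrier_mat m m \<Longrightarrow> \<phi> A \<in> carrier_mat n n" using Lphi unfolding lin_map_def by auto
  define Ch where "Ch = block_mat m n (\<lambda>i j. \<phi> (mat_unit m i j))"
  have Ch1: "adj (diag_rep m n UB) * block_mat m n (\<lambda>i j. \<psi> (UA * mat_unit m i j)) = Ch"
    unfolding Ch_def \<phi>_def by (rule adj_diag_block[OF n0 UB]) (intro car, use UA in auto)
  have Ch2: "kron m n (1\<^sub>m m) (adj UB) * choi_U m n UA \<psi> = Ch"
    using Ch1 by (simp add: kron_adj[OF n0 UB] choi_block[OF n0])
  have Chc: "Ch \<in> carrier_mat (m*n) (m*n)" unfolding Ch_def by auto
  show ?thesis unfolding Ch2
  proof
    assume U: "UCP m n UA UB \<psi>"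
    define V where "V i j = UA * mat_unit m i j" for i j
    have Vc: "\<forall>i<m. \<forall>j<m. V i j \<in> carrier_mat m m" unfolding V_def using UA by auto
    have "adj (diag_rep m m UA) * block_mat m m V = block_mat m m (\<lambda>i j. adj UA * V i j)"
      by (rule adj_diag_block[OF m0 UA]) (use Vc in auto)
    also have "\<dots> = block_mat m m (\<lambda>i j. mat_unit m i j)"
    proof -
      have "adj UA * V i j = mat_unit m i j" for i j
        unfolding V_def using UA aUA UA1 by (simp add: assoc_mult_mat[symmetric, of _ m m _ m _ m] left_mult_one_mat[of _ m m])
      then show ?thesis by simp
    qed
    finally have eqV: "adj (diag_rep m m UA) * block_mat m m V = block_mat m m (\<lambda>i j. mat_unit m i j)" .
    have "psd (m*m) (block_mat m m (\<lambda>i j. mat_unit m i j))"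
    proof (subst psd_iff)
      show "block_mat m m (\<lambda>i j. mat_unit m i j) \<in> carrier_mat (m*m) (m*m)" by auto
      define g where "g r = (if r div m = r mod m then 1 else 0 :: complex)" for r
      have "PSDf (m*m) (\<lambda>i j. g i * cnj (g j))" by (rule PSDf_rank1)
      moreover have "block_mat m m (\<lambda>i j. mat_unit m i j) $$ (r,c) = g r * cnj (g c)"
        if "r < m*m" "c < m*m" for r c
        using that block_div_bound[of r m m] block_div_bound[of c m m] m0
        by (simp add: block_index mat_unit_index g_def)
      ultimately show "PSDf (m*m) (\<lambda>i j. block_mat m m (\<lambda>i j. mat_unit m i j) $$ (i,j))"
        by (subst PSDf_cong[of "m*m" _ "\<lambda>i j. g i * cnj (g j)"]) auto
    qed
    then have "psd (m*n) (adj (diag_rep m n UB) * block_mat m n (\<lambda>i j. \<psi> (V i j)))"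
    proof -
      have "m \<ge> 1" using m0 by simp
      then show ?thesis using U[unfolded UCP_def, rule_format, of m V] Vc eqV \<open>psd (m*m) (block_mat m m (\<lambda>i j. mat_unit m i j))\<close> by simp
    qed
    then show "psd (m*n) Ch" using Ch1 unfolding V_def by simp
  next
    assume P: "psd (m*n) Ch"
    show "UCP m n UA UB \<psi>" unfolding UCP_def
    proof (intro allI impI)
      fix k :: nat and V assume k: "k \<ge> 1" and Vc: "\<forall>i<k. \<forall>j<k. V i j \<in> carrier_mat m m"
        and PV: "psd (k*m) (adj (diag_rep k m UA) * block_mat k m V)"
      define W where "W i j = adj UA * V i j" for i j
      have Wc: "W i j \<in> carrier_mat m m" if "i < k" "j < k" for i j unfolding W_def using Vc that aUA by auto
      have VW: "UA * W i j = V i j" if "i < k" "j < k" for i j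
        unfolding W_def using Vc that UA aUA UA2 by (simp add: assoc_mult_mat[symmetric, of _ m m _ m _ m] left_mult_one_mat[of _ m m])
      have eq1: "adj (diag_rep k m UA) * block_mat k m V = block_mat k m W"
        unfolding W_def by (rule adj_diag_block[OF m0 UA]) (use Vc in auto)
      have eq2: "adj (diag_rep k n UB) * block_mat k n (\<lambda>i j. \<psi> (V i j)) = block_mat k n (\<lambda>i j. adj UB * \<psi> (V i j))"
        by (rule adj_diag_block[OF n0 UB]) (use Vc car in auto)
      have PW: "PSDf (k*m) (\<lambda>i j. block_mat k m W $$ (i,j))"
        proof -
        have "block_mat k m W \<in> carrier_mat (k*m) (k*m)" by (simp add: carrier_matI)
        then show ?thesis using PV eq1 psd_iff[of "block_mat k m W" "k*m"] by simp
      qed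
      have PC: "PSDf (m*n) (\<lambda>i j. Ch $$ (i,j))" using P psd_iff[OF Chc] by auto
      have core: "PSDf (k*n) (\<lambda>r c'. \<Sum>p<m. \<Sum>q<m. block_mat k m W $$ (r div n * m + p, c' div n * m + q) * Ch $$ (p*n + r mod n, q*n + c' mod n))"
        by (rule choi_core[OF n0 m0 PC PW])
      have "PSDf (k*n) (\<lambda>i j. block_mat k n (\<lambda>i j. adj UB * \<psi> (V i j)) $$ (i,j))"
      proof -
        have "block_mat k n (\<lambda>i j. adj UB * \<psi> (V i j)) $$ (r,c') =
              (\<Sum>p<m. \<Sum>q<m. block_mat k m W $$ (r div n * m + p, c' div n * m + q) * Ch $$ (p*n + r mod n, q*n + c' mod n))"
          if r: "r < k*n" and c': "c' < k*n" for r c'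
        proof -
          have rk: "r div n < k" and ck: "c' div n < k" using r c' block_div_bound by auto
          have rd: "r mod n < n" and cd: "c' mod n < n" using n0 by auto
          have "block_mat k n (\<lambda>i j. adj UB * \<psi> (V i j)) $$ (r,c') = \<phi> (W (r div n) (c' div n)) $$ (r mod n, c' mod n)"
            using r c' rk ck unfolding \<phi>_def by (simp add: block_index VW)
          also have "\<dots> = (\<Sum>p<m. \<Sum>q<m. W (r div n) (c' div n) $$ (p,q) * \<phi> (mat_unit m p q) $$ (r mod n, c' mod n))"
            by (rule lin_expand[OF Lphi Wc[OF rk ck] rd cd])
          also have "\<dots> = (\<Sum>p<m. \<Sum>q<m. block_mat k m W $$ (r div n * m + p, c' div n * m + q) * Ch $$ (p*n + r mod n, q*n + c' mod n))"
          proof (intro sum.cong refl)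
            fix p q assume p: "p \<in> {..<m}" and q: "q \<in> {..<m}"
            have b1: "r div n * m + p < k*m" "c' div n * m + q < k*m" using idx_bound rk ck p q by auto
            have b2: "p*n + r mod n < m*n" "q*n + c' mod n < m*n" using idx_bound rd cd p q by auto
            show "W (r div n) (c' div n) $$ (p,q) * \<phi> (mat_unit m p q) $$ (r mod n, c' mod n) =
                  block_mat k m W $$ (r div n * m + p, c' div n * m + q) * Ch $$ (p*n + r mod n, q*n + c' mod n)"
              using b1 b2 p q rd cd m0 n0 unfolding Ch_def by (simp add: block_index)
          qed
          finally show ?thesis .
        qed
        then show ?thesis using core by (subst PSDf_cong) auto
      qed
      then show "psd (k*n) (adj (diag_rep k n UB) * block_mat k n (\<lambda>i j. \<psi> (V i j)))"
        unfolding eq2 by (subst psd_iff) auto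
    qed
  qed
qed

end
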